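(* Let $M$ be a rank-$3$ matroid on $[n]$ with no circuits of size $3$. Let $P_1,\dots,P_k$ be the distinct parallel classes of $M$ having more than one element, and let $N$ be the set of non-loop elements that are not parallel to any other element. Then $M$ is DJS if and only if $$\left\lfloor\tfrac{|P_1|}{2}\right\rfloor+\cdots+\left\lfloor\tfrac{|P_k|}{2}\right\rfloor-k<|N|-2.$$
   Context: A rank-$3$ matroid $M$ on $[n]$ is called DJS if, letting $E$ be the set of non-loop elements of $M$, every linear ordering $w_1w_2\cdots w_m$ of $E$ has three consecutive elements $\{w_j,w_{j+1},w_{j+2}\}$ forming a basis of $M$. *)

theory Defs
  imports Main
begin

definition matroid :: "nat \<Rightarrow> nat set set \<Rightarrow> bool" where
  "matroid n I \<longleftrightarrow>
     (\<forall>X\<in>I. X \<subseteq> {1..n}) \<and>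
     {} \<in> I \<and>
     (\<forall>X Y. Y \<in> I \<longrightarrow> X \<subseteq> Y \<longrightarrow> X \<in> I) \<and>
     (\<forall>X Y. X \<in> I \<longrightarrow> Y \<in> I \<longrightarrow> card X < card Y \<longrightarrow>
        (\<exists>y\<in>Y - X. insert y X \<in> I))"

definition mrank :: "nat set set \<Rightarrow> nat" where
  "mrank I = Max (card ` I)"

definition basis :: "nat set set \<Rightarrow> nat set \<Rightarrow> bool" where
  "basis I B \<longleftrightarrow> B \<in> I \<and> (\<forall>X\<in>I. B \<subseteq> X \<longrightarrow> X = B)"

definition circuit :: "nat \<Rightarrow> nat set set \<Rightarrow> nat set \<Rightarrow> bool" where
  "circuit n I C \<longleftrightarrow> C \<subseteq> {1..n} \<and> C \<notin> I \<and> (\<forall>X. X \<subset> C \<longrightarrow> X \<in> I)"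

definition loop :: "nat \<Rightarrow> nat set set \<Rightarrow> nat \<Rightarrow> bool" where
  "loop n I e \<longleftrightarrow> e \<in> {1..n} \<and> {e} \<notin> I"

definition nonloops :: "nat \<Rightarrow> nat set set \<Rightarrow> nat set" where
  "nonloops n I = {e \<in> {1..n}. {e} \<in> I}"

definition parallel :: "nat \<Rightarrow> nat set set \<Rightarrow> nat \<Rightarrow> nat \<Rightarrow> bool" where
  "parallel n I e f \<longleftrightarrow> e \<in> nonloops n I \<and> f \<in> nonloops n I \<and> e \<noteq> f \<and> {e, f} \<notin> I"

definition parallel_class :: "nat \<Rightarrow> nat set set \<Rightarrow> nat \<Rightarrow> nat set" where
  "parallel_class n I e = {f \<in> nonloops n I. f = e \<or> parallel n I e f}"

definition big_parallel_classes :: "nat \<Rightarrow> nat set set \<Rightarrow> nat set set" where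
  "big_parallel_classes n I =
     {P. \<exists>e\<in>nonloops n I. P = parallel_class n I e \<and> card P > 1}"

definition simple_elems :: "nat \<Rightarrow> nat set set \<Rightarrow> nat set" where
  "simple_elems n I = {e \<in> nonloops n I. \<not> (\<exists>f. parallel n I e f)}"

definition DJS :: "nat \<Rightarrow> nat set set \<Rightarrow> bool" where
  "DJS n I \<longleftrightarrow>
     (\<forall>w. distinct w \<and> set w = nonloops n I \<longrightarrow>
        (\<exists>j. j + 2 < length w \<and> basis I {w ! j, w ! (j + 1), w ! (j + 2)}))"

end

theory Submission imports Defs begin

fun ok :: "'b list \<Rightarrow> bool" where
  "ok (x#y#z#r) = ((x=y \<or> y=z \<or> x=z) \<and> ok (y#z#r))"
| "ok _ = True"

lemma ok_nth: "ok xs \<longleftrightarrow> (\<forall>j. j+2 < length xs \<longrightarrow>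
   xs!j = xs!Suc j \<or> xs!Suc j = xs!Suc (Suc j) \<or> xs!j = xs!Suc (Suc j))"
proof (induction xs rule: ok.induct)
  case (1 x y z r)
  show ?case
  proof
    assume h: "ok (x#y#z#r)"
    show "\<forall>j. j+2 < length (x#y#z#r) \<longrightarrow>
   (x#y#z#r)!j = (x#y#z#r)!Suc j \<or> (x#y#z#r)!Suc j = (x#y#z#r)!Suc (Suc j) \<or> (x#y#z#r)!j = (x#y#z#r)!Suc (Suc j)"
    proof (intro allI impI)
      fix j assume j: "j+2 < length (x#y#z#r)"
      show "(x#y#z#r)!j = (x#y#z#r)!Suc j \<or> (x#y#z#r)!Suc j = (x#y#z#r)!Suc (Suc j) \<or> (x#y#z#r)!j = (x#y#z#r)!Suc (Suc j)"
      proof (cases j)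
        case 0 then show ?thesis using h by auto
      next
        case (Suc i)
        then show ?thesis using h 1 j by auto
      qed
    qed
  next
    assume h: "\<forall>j. j+2 < length (x#y#z#r) \<longrightarrow>
   (x#y#z#r)!j = (x#y#z#r)!Suc j \<or> (x#y#z#r)!Suc j = (x#y#z#r)!Suc (Suc j) \<or> (x#y#z#r)!j = (x#y#z#r)!Suc (Suc j)"
    have a: "x=y \<or> y=z \<or> x=z" using h[rule_format, of 0] by auto
    have "\<forall>j. j+2 < length (y#z#r) \<longrightarrow>
   (y#z#r)!j = (y#z#r)!Suc j \<or> (y#z#r)!Suc j = (y#z#r)!Suc (Suc j) \<or> (y#z#r)!j = (y#z#r)!Suc (Suc j)"
    proof (intro allI impI)
      fix j assume "j+2 < length (y#z#r)"
      then show "(y#z#r)!j = (y#z#r)!Suc j \<or> (y#z#r)!Suc j = (y#z#r)!Suc (Suc j) \<or> (y#z#r)!j = (y#z#r)!Suc (Suc j)"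
        using h[rule_format, of "Suc j"] by auto
    qed
    then show "ok (x#y#z#r)" using a 1 by auto
  qed
qed (auto)

lemma ok_pair[simp]: "ok (x#x#r) = ok (x#r)"
  by (cases r) auto

lemma ok_short: "length xs \<le> 2 \<Longrightarrow> ok xs"
  by (cases xs rule: ok.cases) auto

lemma ok_rep: "ok (a#r) \<Longrightarrow> ok (replicate n a @ a # r)"
proof (induction n)
  case 0 then show ?case by simp
next
  case (Suc n)
  obtain Z where Z: "replicate n a @ a # r = a # Z" by (cases n) auto
  have "ok (a # Z)" using Suc Z by simp
  then show ?case using Z by simp
qed

fun weave :: "'a list \<Rightarrow> 'a list \<Rightarrow> 'a list" where
  "weave (a#b#c#d#as) (t#ts) = a#b#t#weave (c#d#as) ts"
| "weave as ts = as @ ts"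

lemma weave_set: "set (weave as ts) = set as \<union> set ts"
  by (induction as ts rule: weave.induct) auto

lemma weave_distinct: "distinct (weave as ts) = distinct (as @ ts)"
  by (induction as ts rule: weave.induct) (auto simp: weave_set)

lemma weave_head: "\<exists>r. weave (x#y#as) ts = x#y#r"
  by (cases "(x#y#as, ts)" rule: weave.cases) auto

lemma weave_nil[simp]: "weave as [] = as"
  by (cases "(as,[]::'a list)" rule: weave.cases) auto

lemma rep_ok: "length as \<ge> 2 \<Longrightarrow> (\<forall>y\<in>set as. c y = a) \<Longrightarrow> ok (a#a#r)
  \<Longrightarrow> ok (map c as @ r)"
proof -
  assume l: "length as \<ge> 2" and cc: "\<forall>y\<in>set as. c y = a" and o: "ok (a#a#r)"
  have "map c as = replicate (length as) a" using cc
    by (induction as) auto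
  also have "\<dots> = replicate (length as - 1) a @ [a]"
  proof -
    obtain m where "length as = Suc m" using l by (cases "length as") auto
    then show ?thesis by (simp add: replicate_append_same)
  qed
  finally have m: "map c as = replicate (length as - 1) a @ [a]" .
  have "ok (replicate (length as - 1) a @ a # r)" using ok_rep[of a r] o by simp
  then show ?thesis using m by simp
qed

lemma weave_ok: "2 + 2 * length ts \<le> length as \<Longrightarrow> (\<forall>y\<in>set as. c y = a) \<Longrightarrow> ok (a#a#r)
  \<Longrightarrow> ok (map c (weave as ts) @ r)"
proof (induction ts arbitrary: as)
  case Nil
  have "ok (map c as @ r)" by (rule rep_ok) (use Nil in auto)
  then show ?case by simp
next
  case (Cons t ts)
  have "length as \<ge> 4" using Cons(2) by simp
  then obtain a1 b c1 d as' where as: "as = a1#b#c1#d#as'"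
    by (auto simp: Suc_le_length_iff numeral_eq_Suc)
  obtain R where R: "weave (c1#d#as') ts = c1#d#R" using weave_head[of c1 d as' ts] by blast
  have "ok (map c (weave (c1#d#as') ts) @ r)" using Cons as by auto
  then show ?case using Cons(3) R as by simp
qed

fun build :: "'a list list \<Rightarrow> 'a list \<Rightarrow> 'a list" where
  "build [] ts = ts"
| "build (as#ass) ts = weave as (take (length as div 2 - 1) ts) @ build ass (drop (length as div 2 - 1) ts)"

definition cap :: "'a list list \<Rightarrow> nat" where
  "cap ass = sum_list (map (\<lambda>as. length as div 2 - 1) ass)"

lemma build_set: "set (build ass ts) = (\<Union>as\<in>set ass. set as) \<union> set ts"
proof (induction ass arbitrary: ts)
  case Nil then show ?case by simp
next
  case (Cons as ass)
  have "set ts = set (take (length as div 2 - 1) ts) \<union> set (drop (length as div 2 - 1) ts)"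
    by (metis append_take_drop_id set_append)
  then show ?case using Cons by (auto simp: weave_set)
qed

lemma build_distinct: "distinct (concat ass @ ts) \<Longrightarrow> distinct (build ass ts)"
proof (induction ass arbitrary: ts)
  case Nil then show ?case by simp
next
  case (Cons as ass)
  define m where "m = length as div 2 - 1"
  have ts: "ts = take m ts @ drop m ts" by simp
  have d: "distinct (as @ concat ass @ take m ts @ drop m ts)" using Cons(2) ts by simp
  have "distinct (concat ass @ drop m ts)" using Cons(2) by (auto dest: in_set_dropD)
  then have "distinct (build ass (drop m ts))" using Cons(1) by blast
  moreover have "distinct (weave as (take m ts))" using Cons(2) by (auto simp: weave_distinct dest: in_set_takeD)
  moreover have "set (weave as (take m ts)) \<inter> set (build ass (drop m ts)) = {}"
  proof -
    have "set (weave as (take m ts)) = set as \<union> set (take m ts)" by (simp add: weave_set)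
    moreover have "set (build ass (drop m ts)) = (\<Union>x\<in>set ass. set x) \<union> set (drop m ts)" by (simp add: build_set)
    moreover have "set (take m ts) \<inter> set (drop m ts) = {}" using Cons(2)
      by (simp add: set_take_disj_set_drop_if_distinct)
    moreover have "set as \<inter> (\<Union>x\<in>set ass. set x) = {}" "set as \<inter> set ts = {}"
       "(\<Union>x\<in>set ass. set x) \<inter> set ts = {}" using Cons(2) by auto
    ultimately show ?thesis by (auto dest: in_set_takeD in_set_dropD)
  qed
  ultimately show ?case by (simp add: m_def)
qed

lemma build_ok: "ass \<noteq> [] \<Longrightarrow> (\<forall>as\<in>set ass. length as \<ge> 2 \<and> (\<forall>y\<in>set as. c y = c (hd as)))
  \<Longrightarrow> length ts \<le> cap ass + 1
  \<Longrightarrow> ok (map c (build ass ts)) \<and> (\<exists>x y r. build ass ts = x#y#r \<and> c x = c y)"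
proof (induction ass arbitrary: ts)
  case Nil then show ?case by simp
next
  case (Cons as ass)
  define m where "m = length as div 2 - 1"
  define a where "a = c (hd as)"
  have l2: "length as \<ge> 2" and ca: "\<forall>y\<in>set as. c y = a" using Cons(3) by (auto simp: a_def)
  have lt: "2 + 2 * length (take m ts) \<le> length as" using l2 by (auto simp: m_def)
  have ld: "length (drop m ts) \<le> cap ass + 1" using Cons(4) by (auto simp: m_def cap_def)
  obtain x1 y1 as' where as: "as = x1#y1#as'" using l2
    by (auto simp: Suc_le_length_iff numeral_eq_Suc)
  obtain R1 where R1: "weave as (take m ts) = x1#y1#R1" using weave_head[of x1 y1 as' "take m ts"] as by blast
  have cx: "c x1 = c y1" using ca as by auto
  have "build (as#ass) ts = x1#y1#(R1 @ build ass (drop m ts))" using R1 by (simp add: m_def)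
  moreover have "ok (map c (build (as#ass) ts))"
  proof (cases "ass = []")
    case True
    then have "length (drop m ts) \<le> 1" using ld by (simp add: cap_def)
    then have "ok (a # map c (drop m ts))" by (intro ok_short) simp
    then have "ok (map c (weave as (take m ts)) @ map c (drop m ts))"
      using weave_ok[OF lt ca] by simp
    then show ?thesis using True by (simp add: m_def)
  next
    case False
    then obtain x y r where b: "build ass (drop m ts) = x#y#r" "c x = c y"
      and o: "ok (map c (build ass (drop m ts)))" using Cons(1)[OF False _ ld] Cons(3) by auto
    have "ok (a#a#map c (build ass (drop m ts)))" using b o by simp
    then show ?thesis using weave_ok[OF lt ca] by (simp add: m_def)
  qed
  ultimately show ?case using cx by auto
qed

definition cnt :: "('a \<Rightarrow> 'b) \<Rightarrow> 'a set \<Rightarrow> 'b \<Rightarrow> nat" where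
  "cnt c S a = card {y\<in>S. c y = a}"

definition Phi :: "('a \<Rightarrow> 'b) \<Rightarrow> 'a set \<Rightarrow> int" where
  "Phi c S = (\<Sum>a\<in>c`S. int (cnt c S a div 2) - 1) + 2"

lemma Phi_empty: "Phi c {} = 2" by (simp add: Phi_def)

lemma Phi_new: assumes "finite S" "x \<notin> S" "c x \<notin> c`S"
  shows "Phi c (insert x S) = Phi c S - 1"
proof -
  have "cnt c (insert x S) (c x) = 1"
  proof -
    have "{y\<in>insert x S. c y = c x} = {x}" using assms by (auto; metis image_eqI)
    then show ?thesis by (simp add: cnt_def)
  qed
  moreover have oth: "\<And>a. a\<in>c`S \<Longrightarrow> cnt c (insert x S) a = cnt c S a"
  proof -
    fix a assume "a \<in> c`S"
    then have "{y\<in>insert x S. c y = a} = {y\<in>S. c y = a}" using assms by auto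
    then show "cnt c (insert x S) a = cnt c S a" by (simp add: cnt_def)
  qed
  have "(\<Sum>a\<in>c`S. int (cnt c (insert x S) a div 2) - 1) = (\<Sum>a\<in>c`S. int (cnt c S a div 2) - 1)"
    by (rule sum.cong) (auto simp: oth)
  ultimately show ?thesis using assms by (simp add: Phi_def)
qed

lemma Phi_old: assumes "finite S" "x \<notin> S" "c x \<in> c`S"
  shows "Phi c (insert x S) = Phi c S + (if odd (cnt c S (c x)) then 1 else 0)"
proof -
  have img: "c`(insert x S) = c`S" using assms by auto
  have "{y\<in>insert x S. c y = c x} = insert x {y\<in>S. c y = c x}" by auto
  then have cx: "cnt c (insert x S) (c x) = cnt c S (c x) + 1" using assms by (simp add: cnt_def)
  have oth: "\<forall>a\<in>c`S - {c x}. cnt c (insert x S) a = cnt c S a"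
  proof
    fix a assume "a \<in> c`S - {c x}"
    then have "{y\<in>insert x S. c y = a} = {y\<in>S. c y = a}" using assms by auto
    then show "cnt c (insert x S) a = cnt c S a" by (simp add: cnt_def)
  qed
  have fin: "finite (c`S)" using assms by simp
  have "(\<Sum>a\<in>c`S. int (cnt c (insert x S) a div 2) - 1)
     = (int (cnt c (insert x S) (c x) div 2) - 1) + (\<Sum>a\<in>c`S - {c x}. int (cnt c (insert x S) a div 2) - 1)"
    using fin assms(3) by (simp add: sum.remove)
  also have "\<dots> = (int ((cnt c S (c x) + 1) div 2) - 1) + (\<Sum>a\<in>c`S - {c x}. int (cnt c S a div 2) - 1)"
    using cx oth by simp
  also have "(\<Sum>a\<in>c`S. int (cnt c S a div 2) - 1)
     = (int (cnt c S (c x) div 2) - 1) + (\<Sum>a\<in>c`S - {c x}. int (cnt c S a div 2) - 1)"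
    using fin assms(3) by (simp add: sum.remove)
  moreover have "int ((cnt c S (c x) + 1) div 2) = int (cnt c S (c x) div 2) + (if odd (cnt c S (c x)) then 1 else 0)"
    by (cases "even (cnt c S (c x))") (auto elim!: evenE oddE)
  ultimately show ?thesis using img by (simp add: Phi_def)
qed

lemma cnt_pos: "finite S \<Longrightarrow> x \<in> S \<Longrightarrow> cnt c S (c x) \<ge> 1"
proof -
  assume "finite S" "x \<in> S"
  then have "finite {y\<in>S. c y = c x}" "x \<in> {y\<in>S. c y = c x}" by auto
  then have "card {y\<in>S. c y = c x} > 0" by (auto simp: card_gt_0_iff)
  then show ?thesis by (simp add: cnt_def)
qed

lemma ok_Phi: "distinct w \<Longrightarrow> ok (map c w) \<Longrightarrow> Phi c (set w) \<ge> 0 \<and>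
   ((length w < 2 \<or> (\<exists>x y r. w = x#y#r \<and> c x = c y) \<or> (w \<noteq> [] \<and> even (cnt c (set w) (c (hd w)))))
     \<longrightarrow> Phi c (set w) \<ge> 1)"
proof (induction w)
  case Nil then show ?case by (simp add: Phi_empty)
next
  case (Cons x w)
  have okw: "ok (map c w)" using Cons(3) by (cases "map c w" rule: ok.cases) auto
  have IH: "Phi c (set w) \<ge> 0"
    "(length w < 2 \<or> (\<exists>x y r. w = x#y#r \<and> c x = c y) \<or> (w \<noteq> [] \<and> even (cnt c (set w) (c (hd w)))))
     \<Longrightarrow> Phi c (set w) \<ge> 1" using Cons okw by auto
  have xn: "x \<notin> set w" using Cons(2) by simp
  show ?case
  proof (cases "c x \<in> c ` set w")
    case False
    have P: "Phi c (set (x#w)) = Phi c (set w) - 1" using Phi_new[OF _ xn False] by simp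
    have g1: "Phi c (set w) \<ge> 1"
    proof (cases "length w < 2")
      case True then show ?thesis using IH by auto
    next
      case F2: False
      then obtain y z r where w: "w = y#z#r" by (cases w rule: ok.cases) auto
      have "c x = c y \<or> c y = c z \<or> c x = c z" using Cons(3) w by simp
      then have "c y = c z" using False w by auto
      then show ?thesis using IH w by auto
    qed
    have cnt1: "cnt c (set (x#w)) (c x) = 1"
    proof -
      have "{y\<in>set (x#w). c y = c x} = {x}" using False by (auto; metis image_eqI)
      then show ?thesis by (simp add: cnt_def)
    qed
    have "w = [] \<Longrightarrow> Phi c (set (x#w)) \<ge> 1" using P by (simp add: Phi_empty)
    moreover have "\<not> (\<exists>x' y r. x#w = x'#y#r \<and> c x' = c y)" using False by auto
    ultimately show ?thesis using P g1 cnt1 by auto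
  next
    case True
    have P: "Phi c (set (x#w)) = Phi c (set w) + (if odd (cnt c (set w) (c x)) then 1 else 0)"
      using Phi_old[OF _ xn True] by simp
    have wne: "w \<noteq> []" using True by auto
    show ?thesis
    proof (cases "odd (cnt c (set w) (c x))")
      case True then show ?thesis using P IH by auto
    next
      case ev: False
      have c1: "cnt c (set (x#w)) (c x) = cnt c (set w) (c x) + 1"
      proof -
        have "{y\<in>set (x#w). c y = c x} = insert x {y\<in>set w. c y = c x}" by auto
        then show ?thesis using xn by (simp add: cnt_def)
      qed
      have "(\<exists>x' y r. x#w = x'#y#r \<and> c x' = c y) \<Longrightarrow> Phi c (set w) \<ge> 1"
      proof -
        assume "\<exists>x' y r. x#w = x'#y#r \<and> c x' = c y"
        then have "c (hd w) = c x" by auto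
        then show ?thesis using IH(2) wne ev by auto
      qed
      then show ?thesis using P IH ev c1 wne by auto
    qed
  qed
qed

lemma Phi_split: assumes fin: "finite V"
  shows "Phi c V = (\<Sum>a\<in>{a\<in>c`V. 1 < cnt c V a}. int (cnt c V a div 2))
     - int (card {a\<in>c`V. 1 < cnt c V a}) - int (card {y\<in>V. cnt c V (c y) = 1}) + 2"
proof -
  define B where "B = {a\<in>c`V. 1 < cnt c V a}"
  define O1 where "O1 = {a\<in>c`V. cnt c V a = 1}"
  define Ns where "Ns = {y\<in>V. cnt c V (c y) = 1}"
  have un: "c`V = B \<union> O1" using cnt_pos[OF fin, of _ c] by (force simp: B_def O1_def)
  have dj: "B \<inter> O1 = {}" by (auto simp: B_def O1_def)
  have fB: "finite B" "finite O1" using fin by (auto simp: B_def O1_def)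
  have "(\<Sum>a\<in>c`V. int (cnt c V a div 2) - 1) = (\<Sum>a\<in>B. int (cnt c V a div 2) - 1) + (\<Sum>a\<in>O1. int (cnt c V a div 2) - 1)"
    using un dj fB by (simp add: sum.union_disjoint)
  also have "(\<Sum>a\<in>O1. int (cnt c V a div 2) - 1) = (\<Sum>a\<in>O1. -1)"
    by (rule sum.cong) (auto simp: O1_def)
  also have "(\<Sum>a\<in>B. int (cnt c V a div 2) - 1) = (\<Sum>a\<in>B. int (cnt c V a div 2)) - int (card B)"
    by (simp add: sum_subtractf)
  finally have e: "(\<Sum>a\<in>c`V. int (cnt c V a div 2) - 1) = (\<Sum>a\<in>B. int (cnt c V a div 2)) - int (card B) - int (card O1)"
    by simp
  have "bij_betw c Ns O1"
  proof (rule bij_betw_imageI)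
    show "inj_on c Ns"
    proof
      fix y y' assume y: "y \<in> Ns" "y' \<in> Ns" "c y = c y'"
      then have "card {z\<in>V. c z = c y} = 1" by (simp add: Ns_def cnt_def)
      then obtain z where "{z\<in>V. c z = c y} = {z}" by (rule card_1_singletonE)
      moreover have "y \<in> {z\<in>V. c z = c y}" "y' \<in> {z\<in>V. c z = c y}" using y by (auto simp: Ns_def)
      ultimately show "y = y'" by auto
    qed
    show "c ` Ns = O1" by (auto simp: Ns_def O1_def)
  qed
  then have "card Ns = card O1" by (rule bij_betw_same_card)
  then show ?thesis using e by (simp add: Phi_def B_def Ns_def)
qed

lemma construct: assumes fin: "finite (V::nat set)" and P: "Phi c V \<ge> 0"
  shows "\<exists>w. distinct w \<and> set w = V \<and> ok (map c w)"
proof -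
  define B where "B = {a\<in>c`V. 1 < cnt c V a}"
  define Ns where "Ns = {y\<in>V. cnt c V (c y) = 1}"
  define cls where "cls a = {y\<in>V. c y = a}" for a
  have fB: "finite B" using fin by (simp add: B_def)
  obtain Pl where Pl: "distinct Pl" "set Pl = B" using finite_distinct_list[OF fB] by blast
  define ass where "ass = map (\<lambda>a. sorted_list_of_set (cls a)) Pl"
  define ss where "ss = sorted_list_of_set Ns"
  have fcls: "finite (cls a)" for a using fin by (simp add: cls_def)
  have ss: "distinct ss" "set ss = Ns" "length ss = card Ns" using fin by (auto simp: ss_def Ns_def)
  have lencls: "length (sorted_list_of_set (cls a)) = cnt c V a" for a
    by (simp add: cls_def cnt_def)
  have cap: "int (cap ass) = (\<Sum>a\<in>B. int (cnt c V a div 2)) - int (card B)"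
  proof -
    have "cap ass = (\<Sum>a\<leftarrow>Pl. cnt c V a div 2 - 1)"
      by (simp add: cap_def ass_def comp_def lencls cnt_def cls_def)
    also have "\<dots> = (\<Sum>a\<in>B. cnt c V a div 2 - 1)" using Pl by (simp add: sum_list_distinct_conv_sum_set)
    finally have "int (cap ass) = (\<Sum>a\<in>B. int (cnt c V a div 2 - 1))" by simp
    also have "\<dots> = (\<Sum>a\<in>B. int (cnt c V a div 2) - 1)"
    proof (rule sum.cong)
      fix a assume "a \<in> B"
      then have "cnt c V a div 2 \<ge> 1" by (auto simp: B_def)
      then show "int (cnt c V a div 2 - 1) = int (cnt c V a div 2) - 1" by simp
    qed simp
    also have "\<dots> = (\<Sum>a\<in>B. int (cnt c V a div 2)) - int (card B)" by (simp add: sum_subtractf)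
    finally show ?thesis .
  qed
  have len: "card Ns \<le> cap ass + 2" using P cap Phi_split[OF fin, of c] by (simp add: B_def Ns_def)
  have setass: "(\<Union>as\<in>set ass. set as) = (\<Union>a\<in>B. cls a)" using Pl fcls by (auto simp: ass_def)
  have Vun: "V = (\<Union>a\<in>B. cls a) \<union> Ns"
  proof -
    have "y \<in> (\<Union>a\<in>B. cls a) \<union> Ns" if "y \<in> V" for y
      using cnt_pos[OF fin that, of c] that by (cases "cnt c V (c y) = 1") (auto simp: B_def Ns_def cls_def)
    moreover have "(\<Union>a\<in>B. cls a) \<subseteq> V" "Ns \<subseteq> V" by (auto simp: cls_def Ns_def)
    ultimately show ?thesis by blast
  qed
  have dj: "(\<Union>a\<in>B. cls a) \<inter> Ns = {}" by (auto simp: B_def Ns_def cls_def)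
  have dass: "distinct (concat ass)"
  proof (rule distinct_concat)
    have "inj_on (\<lambda>a. sorted_list_of_set (cls a)) B"
    proof
      fix a b assume ab: "a \<in> B" "b \<in> B" "sorted_list_of_set (cls a) = sorted_list_of_set (cls b)"
      then have "cls a = cls b" using fcls by (metis set_sorted_list_of_set)
      moreover obtain y where "y \<in> V" "c y = a" using ab(1) by (auto simp: B_def)
      ultimately show "a = b" by (auto simp: cls_def)
    qed
    then show "distinct ass" using Pl by (simp add: ass_def distinct_map)
    show "\<And>ys. ys \<in> set ass \<Longrightarrow> distinct ys" by (auto simp: ass_def)
    show "\<And>ys zs. ys \<in> set ass \<Longrightarrow> zs \<in> set ass \<Longrightarrow> ys \<noteq> zs \<Longrightarrow> set ys \<inter> set zs = {}"
      using fcls by (auto simp: ass_def cls_def)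
  qed
  have dall: "distinct (concat ass @ ss)" using dass ss dj setass by auto
  show ?thesis
  proof (cases "Pl = []")
    case True
    then have "B = {}" using Pl by simp
    then have "V = Ns" using Vun by simp
    moreover have "cap ass = 0" using True by (simp add: ass_def cap_def)
    ultimately show ?thesis using ss len ok_short[of "map c ss"] by auto
  next
    case False
    define w where "w = take 1 ss @ build ass (drop 1 ss)"
    have assne: "ass \<noteq> []" using False by (simp add: ass_def)
    have asprop: "\<forall>as\<in>set ass. length as \<ge> 2 \<and> (\<forall>y\<in>set as. c y = c (hd as))"
    proof
      fix as assume "as \<in> set ass"
      then obtain a where a: "a \<in> B" "as = sorted_list_of_set (cls a)" using Pl by (auto simp: ass_def)
      then have "length as \<ge> 2" using lencls by (auto simp: B_def)
      moreover have "\<forall>y\<in>set as. c y = a" using a fcls by (auto simp: cls_def)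
      ultimately show "length as \<ge> 2 \<and> (\<forall>y\<in>set as. c y = c (hd as))"
        by (metis hd_in_set list.size(3) not_numeral_le_zero)
    qed
    have ld: "length (drop 1 ss) \<le> cap ass + 1" using len ss by simp
    obtain x y r where b: "build ass (drop 1 ss) = x#y#r" "c x = c y"
      and o: "ok (map c (build ass (drop 1 ss)))" using build_ok[OF assne asprop ld] by blast
    have okw: "ok (map c w)"
    proof (cases ss)
      case Nil then show ?thesis using o by (simp add: w_def)
    next
      case (Cons s ss')
      then show ?thesis using o b by (simp add: w_def)
    qed
    have "set w = V" using Vun setass ss by (simp add: w_def build_set) (metis append_take_drop_id set_append sup_commute sup_left_commute)
    moreover have "distinct w"
    proof -
      have "distinct (concat ass @ drop 1 ss)" using dall by (auto dest: in_set_dropD)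
      then have "distinct (build ass (drop 1 ss))" by (rule build_distinct)
      moreover have "set (take 1 ss) \<inter> set (build ass (drop 1 ss)) = {}"
      proof -
        have "set (take 1 ss) \<inter> set (drop 1 ss) = {}" using ss by (simp add: set_take_disj_set_drop_if_distinct)
        moreover have "set (take 1 ss) \<inter> (\<Union>as\<in>set ass. set as) = {}" using dall by (auto dest: in_set_takeD)
        ultimately show ?thesis by (auto simp: build_set)
      qed
      ultimately show ?thesis using ss by (simp add: w_def)
    qed
    ultimately show ?thesis using okw by blast
  qed
qed

lemma par_trans:
  assumes M: "matroid n I" and V: "e \<in> nonloops n I" "f \<in> nonloops n I" "g \<in> nonloops n I"
    and ef: "{e,f} \<notin> I" and fg: "{f,g} \<notin> I" and neq: "e \<noteq> g"
  shows "{e,g} \<notin> I"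
proof
  assume eg: "{e,g} \<in> I"
  have f1: "{f} \<in> I" using V by (simp add: nonloops_def)
  have "e \<noteq> f" using ef f1 by auto
  moreover have "f \<noteq> g" using fg f1 by auto
  moreover note neq
  ultimately have "card {f} < card {e,g}" by simp
  then obtain y where y: "y \<in> {e,g} - {f}" "insert y {f} \<in> I"
  proof -
    have aug: "\<forall>X Y. X \<in> I \<longrightarrow> Y \<in> I \<longrightarrow> card X < card Y \<longrightarrow> (\<exists>y\<in>Y - X. insert y X \<in> I)"
      using M unfolding matroid_def by blast
    show ?thesis using aug[rule_format, OF f1 eg \<open>card {f} < card {e,g}\<close>] that by blast
  qed
  then show False using ef fg by (auto simp: insert_commute)
qed

lemma pc_eq: "e \<in> nonloops n I \<Longrightarrow>
  parallel_class n I e = {f\<in>nonloops n I. e = f \<or> {e,f} \<notin> I}"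
  by (auto simp: parallel_class_def parallel_def)

lemma c_eq_iff:
  assumes M: "matroid n I" and V: "e \<in> nonloops n I" "f \<in> nonloops n I"
  shows "parallel_class n I e = parallel_class n I f \<longleftrightarrow> e = f \<or> {e,f} \<notin> I"
proof
  assume eq: "parallel_class n I e = parallel_class n I f"
  have "f \<in> parallel_class n I f" using V by (simp add: pc_eq)
  then have "f \<in> parallel_class n I e" using eq by simp
  then show "e = f \<or> {e,f} \<notin> I" using V by (simp add: pc_eq)
next
  assume h: "e = f \<or> {e,f} \<notin> I"
  show "parallel_class n I e = parallel_class n I f"
  proof (cases "e = f")
    case True then show ?thesis by simp
  next
    case False
    then have ef: "{e,f} \<notin> I" "{f,e} \<notin> I" using h by (auto simp: insert_commute)
    have "g \<in> nonloops n I \<Longrightarrow> (e = g \<or> {e,g} \<notin> I) \<longleftrightarrow> (f = g \<or> {f,g} \<notin> I)" for g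
    proof -
      assume g: "g \<in> nonloops n I"
      have a: "{e,g} \<notin> I" if "{f,g} \<notin> I" "e \<noteq> g"
        using par_trans[OF M V(1) V(2) g ef(1) that] .
      have b: "{f,g} \<notin> I" if "{e,g} \<notin> I" "f \<noteq> g"
        using par_trans[OF M V(2) V(1) g ef(2) that] .
      show ?thesis using a b ef by (cases "e = g"; cases "f = g") auto
    qed
    then show ?thesis using V by (auto simp: pc_eq)
  qed
qed

theorem proposition6p7:
  fixes n :: nat and I :: "nat set set"
  assumes "matroid n I"
    and "mrank I = 3"
    and "\<forall>C. circuit n I C \<longrightarrow> card C \<noteq> 3"
  shows "DJS n I \<longleftrightarrow>
    (\<Sum>P\<in>big_parallel_classes n I. int (card P div 2))
      - int (card (big_parallel_classes n I))
      < int (card (simple_elems n I)) - 2"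
proof -
  note M = assms(1)
  define V where "V = nonloops n I"
  define c where "c = parallel_class n I"
  have sub: "\<forall>X\<in>I. X \<subseteq> {1..n}" and emp: "{} \<in> I"
    and down: "\<And>X Y. Y \<in> I \<Longrightarrow> X \<subseteq> Y \<Longrightarrow> X \<in> I"
    using M unfolding matroid_def by blast+
  have finI: "finite I" using sub by (meson finite_Pow_iff finite_atLeastAtMost finite_subset PowI subsetI)
  have card3: "card X \<le> 3" if "X \<in> I" for X
  proof -
    have "card X \<le> Max (card ` I)" using finI that by (intro Max_ge) auto
    then show ?thesis using assms(2) by (simp add: mrank_def)
  qed
  have finV: "finite V" by (simp add: V_def nonloops_def)
  have Vsub: "V \<subseteq> {1..n}" by (auto simp: V_def nonloops_def)
  have ceq: "x \<in> V \<Longrightarrow> y \<in> V \<Longrightarrow> c x = c y \<longleftrightarrow> x = y \<or> {x,y} \<notin> I" for x y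
    using c_eq_iff[OF M] by (simp add: V_def c_def)
  have cls: "{y\<in>V. c y = c e} = c e" if "e \<in> V" for e
  proof -
    have "y \<in> c e \<longleftrightarrow> y \<in> V \<and> (e = y \<or> {e,y} \<notin> I)" for y
      using that by (simp add: c_def V_def pc_eq)
    moreover have "y \<in> V \<Longrightarrow> c y = c e \<longleftrightarrow> (e = y \<or> {e,y} \<notin> I)" for y
      using ceq[OF _ that, of y] by (auto simp: insert_commute)
    ultimately show ?thesis by blast
  qed
  have cnt_eq: "cnt c V (c e) = card (c e)" if "e \<in> V" for e
    using cls[OF that] by (simp add: cnt_def)
  have big: "big_parallel_classes n I = {a\<in>c`V. 1 < cnt c V a}"
    using cnt_eq by (auto simp: big_parallel_classes_def c_def V_def)
  have simple: "simple_elems n I = {y\<in>V. cnt c V (c y) = 1}"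
  proof -
    have eqv: "(\<not>(\<exists>f. parallel n I y f)) \<longleftrightarrow> card (c y) = 1" if y: "y \<in> V" for y
    proof
      assume "\<not>(\<exists>f. parallel n I y f)"
      then have "c y = {y}" using y by (auto simp: c_def V_def parallel_class_def)
      then show "card (c y) = 1" by simp
    next
      assume "card (c y) = 1"
      then obtain z where z: "c y = {z}" by (rule card_1_singletonE)
      have "y \<in> c y" using y by (simp add: c_def V_def pc_eq)
      then have "c y = {y}" using z by auto
      then show "\<not>(\<exists>f. parallel n I y f)"
        by (auto simp: c_def parallel_class_def parallel_def)
    qed
    show ?thesis
    proof (rule set_eqI)
      fix y
      show "y \<in> simple_elems n I \<longleftrightarrow> y \<in> {y\<in>V. cnt c V (c y) = 1}"
      proof (cases "y \<in> V")
        case True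
        then show ?thesis using eqv[OF True] cnt_eq[OF True] by (simp add: simple_elems_def V_def)
      next
        case False
        then show ?thesis by (simp add: simple_elems_def V_def)
      qed
    qed
  qed
  have sumeq: "(\<Sum>P\<in>big_parallel_classes n I. int (card P div 2)) = (\<Sum>a\<in>{a\<in>c`V. 1 < cnt c V a}. int (cnt c V a div 2))"
    unfolding big by (rule sum.cong) (auto simp: cnt_eq)
  have RHS: "((\<Sum>P\<in>big_parallel_classes n I. int (card P div 2))
      - int (card (big_parallel_classes n I))
      < int (card (simple_elems n I)) - 2) \<longleftrightarrow> Phi c V < 0"
  proof -
    have "Phi c V = (\<Sum>P\<in>big_parallel_classes n I. int (card P div 2))
      - int (card (big_parallel_classes n I)) - int (card (simple_elems n I)) + 2"
      unfolding sumeq unfolding big simple by (rule Phi_split[OF finV])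
    then show ?thesis by linarith
  qed
  have basis_iff: "basis I {x,y,z} \<longleftrightarrow> c x \<noteq> c y \<and> c y \<noteq> c z \<and> c x \<noteq> c z"
    if xyz: "x \<in> V" "y \<in> V" "z \<in> V" "x \<noteq> y" "y \<noteq> z" "x \<noteq> z" for x y z
  proof
    assume "basis I {x,y,z}"
    then have i: "{x,y,z} \<in> I" by (simp add: basis_def)
    have "{x,y} \<in> I" "{y,z} \<in> I" "{x,z} \<in> I" by (rule down[OF i]; auto)+
    then show "c x \<noteq> c y \<and> c y \<noteq> c z \<and> c x \<noteq> c z" using ceq xyz by auto
  next
    assume "c x \<noteq> c y \<and> c y \<noteq> c z \<and> c x \<noteq> c z"
    then have p: "{x,y} \<in> I" "{y,z} \<in> I" "{x,z} \<in> I" using ceq xyz by auto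
    have i: "{x,y,z} \<in> I"
    proof (rule ccontr)
      assume ni: "{x,y,z} \<notin> I"
      have "circuit n I {x,y,z}"
        unfolding circuit_def
      proof (intro conjI allI impI)
        show "{x,y,z} \<subseteq> {1..n}" using xyz Vsub by auto
        show "{x,y,z} \<notin> I" by (rule ni)
        fix X assume X: "X \<subset> {x,y,z}"
        then obtain u where u: "u \<in> {x,y,z}" "u \<notin> X" by blast
        have "X \<subseteq> {x,y,z}" using X by blast
        then have "X \<subseteq> {x,y,z} - {u}" using u(2) by blast
        then have "X \<subseteq> {x,y} \<or> X \<subseteq> {y,z} \<or> X \<subseteq> {x,z}" using u(1) by blast
        then show "X \<in> I" using down[OF p(1)] down[OF p(2)] down[OF p(3)] by blast
      qed
      moreover have "card {x,y,z} = 3" using xyz by simp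
      ultimately show False using assms(3) by blast
    qed
    show "basis I {x,y,z}" unfolding basis_def
    proof (intro conjI ballI impI)
      show "{x,y,z} \<in> I" by (rule i)
      fix X assume X: "X \<in> I" "{x,y,z} \<subseteq> X"
      have "X \<subseteq> {1..n}" using X(1) sub by blast
      then have fX: "finite X" by (rule finite_subset) simp
      have "card X \<le> card {x,y,z}" using card3[OF X(1)] xyz by simp
      from card_seteq[OF fX X(2) this] show "X = {x,y,z}" by simp
    qed
  qed
  have win: "(\<exists>j. j + 2 < length w \<and> basis I {w ! j, w ! (j + 1), w ! (j + 2)}) \<longleftrightarrow> \<not> ok (map c w)"
    if w: "distinct w" "set w = V" for w
  proof -
    have "basis I {w ! j, w ! (j + 1), w ! (j + 2)} \<longleftrightarrow>
      \<not> (c (w!j) = c (w!Suc j) \<or> c (w!Suc j) = c (w!Suc (Suc j)) \<or> c (w!j) = c (w!Suc (Suc j)))"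
      if j: "j + 2 < length w" for j
    proof -
      have "w!j \<in> V" "w!Suc j \<in> V" "w!Suc (Suc j) \<in> V" using j w by auto
      moreover have "w!j \<noteq> w!Suc j" "w!Suc j \<noteq> w!Suc (Suc j)" "w!j \<noteq> w!Suc (Suc j)"
        using j w(1) by (auto simp: nth_eq_iff_index_eq)
      ultimately show ?thesis using basis_iff by simp
    qed
    then show ?thesis by (auto simp: ok_nth)
  qed
  have "DJS n I \<longleftrightarrow> \<not> (\<exists>w. distinct w \<and> set w = V \<and> ok (map c w))"
    unfolding DJS_def V_def[symmetric] using win by blast
  also have "\<dots> \<longleftrightarrow> Phi c V < 0"
  proof
    assume "\<not> (\<exists>w. distinct w \<and> set w = V \<and> ok (map c w))"
    then show "Phi c V < 0" using construct[OF finV, of c] by force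
  next
    assume "Phi c V < 0"
    then show "\<not> (\<exists>w. distinct w \<and> set w = V \<and> ok (map c w))" using ok_Phi[of _ c] by force
  qed
  finally show ?thesis using RHS by simp
qed

end
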